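(* Under the mixed membership model with Conditions (C1) and (C2), $\max_{1\le k\le K}\|\mathbf v_k\|_\infty=O(n^{-1/2})$. The same conclusion holds under the degree-corrected mixed membership model with Conditions (C1) and (C4).
   Context: $n$ nodes, $K$ fixed; $\mathbf X$ symmetric binary adjacency matrix (independent Bernoulli entries on/above the diagonal, possibly with zeroed diagonal) with mean structure $\mathbf H$, $\mathbf W=\mathbf X-\mathbf H$, $\alpha_n=\{\max_m\sum_l\mathrm{var}(w_{lm})\}^{1/2}$. DCMM model: $\mathbf H=\boldsymbol\Theta\boldsymbol\Pi\mathbf P\boldsymbol\Pi^T\boldsymbol\Theta$, $\boldsymbol\Theta=\mathrm{diag}(\theta_1,\dots,\theta_n)$, $\theta_l>0$, $\theta_{\max},\theta_{\min}$ max/min; rows $\boldsymbol\pi_l$ of $\boldsymbol\Pi\in\mathbb R^{n\times K}$ probability vectors; $\mathbf P\in[0,1]^{K\times K}$ nonsingular; $\operatorname{rank}\mathbf H=K$. Mixed membership model: $\boldsymbol\Theta=\sqrt\theta\mathbf I_n$, i.e. $\mathbf H=\theta\boldsymbol\Pi\mathbf P\boldsymbol\Pi^T$. $\mathcal N_k=\{l:\boldsymbol\pi_l(k)=1\}$. $\mathbf H=\mathbf V\mathbf D\mathbf V^T$ with $\mathbf D=\mathrm{diag}(d_1,\dots,d_K)$, $|d_1|\ge\dots\ge|d_K|>0$, $\mathbf V=(\mathbf v_1,\dots,\mathbf v_K)$ orthonormal. (C1): constant $c_0>0$, $\min\{|d_a|/|d_b|:a<b,\ d_a\ne-d_b\}\ge1+c_0$,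 $\alpha_n\to\infty$. (C2): constants $0<c_0,c_1<1$: $\lambda_K(\boldsymbol\Pi^T\boldsymbol\Pi)\ge c_0n$, $\lambda_K(\mathbf P)\ge c_0$, $\theta\ge n^{-c_1}$. (C4): constants $c_2,c_3\in(0,1)$, $c_4>0$: $\min_k|\mathcal N_k|\ge c_2n$, $\theta_{\max}\le c_4\theta_{\min}$, $\theta_{\min}^2\ge n^{-c_3}$. *)

theory Defs
  imports Complex_Main "Jordan_Normal_Form.DL_Rank" "Jordan_Normal_Form.Char_Poly"
begin

text \<open>Matrices indexed by natural numbers: an n x K matrix is a function
  nat => nat => real, only entries with row index < n and column index < K matter.
  Indices run from 0 (paper: from 1).\<close>

definition dcmm_H :: "nat \<Rightarrow> (nat \<Rightarrow> real) \<Rightarrow> (nat \<Rightarrow> nat \<Rightarrow> real) \<Rightarrow> (nat \<Rightarrow> nat \<Rightarrow> real)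
    \<Rightarrow> nat \<Rightarrow> nat \<Rightarrow> real" where
  "dcmm_H K th Pm P l m = th l * th m * (\<Sum>a<K. \<Sum>b<K. Pm l a * P a b * Pm m b)"

text \<open>The DCMM model on n nodes with K communities; zd says whether the diagonal of X
  is zeroed. Entries of H that are means of Bernoulli entries of X lie in [0,1].\<close>
definition dcmm_model :: "nat \<Rightarrow> nat \<Rightarrow> bool \<Rightarrow> (nat \<Rightarrow> real) \<Rightarrow> (nat \<Rightarrow> nat \<Rightarrow> real)
    \<Rightarrow> (nat \<Rightarrow> nat \<Rightarrow> real) \<Rightarrow> bool" where
  "dcmm_model n K zd th Pm P \<longleftrightarrow>
     (\<forall>l<n. 0 < th l) \<and>
     (\<forall>l<n. (\<forall>k<K. 0 \<le> Pm l k) \<and> (\<Sum>k<K. Pm l k) = 1) \<and>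
     (\<forall>a<K. \<forall>b<K. 0 \<le> P a b \<and> P a b \<le> 1) \<and>
     det (mat K K (\<lambda>(a,b). P a b)) \<noteq> 0 \<and>
     vec_space.rank n (mat n n (\<lambda>(l,m). dcmm_H K th Pm P l m) :: real mat) = K \<and>
     (\<forall>l<n. \<forall>m<n. (l \<noteq> m \<or> \<not> zd) \<longrightarrow>
        0 \<le> dcmm_H K th Pm P l m \<and> dcmm_H K th Pm P l m \<le> 1)"

definition mm_model :: "nat \<Rightarrow> nat \<Rightarrow> bool \<Rightarrow> real \<Rightarrow> (nat \<Rightarrow> nat \<Rightarrow> real)
    \<Rightarrow> (nat \<Rightarrow> nat \<Rightarrow> real) \<Rightarrow> bool" where
  "mm_model n K zd theta Pm P \<longleftrightarrow> 0 < theta \<and> dcmm_model n K zd (\<lambda>_. sqrt theta) Pm P"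

text \<open>var(w_lm), W = X - H, X_lm ~ Bernoulli(h_lm) independent; if the diagonal is
  zeroed, X_ll = 0 deterministically so var(w_ll) = 0.\<close>
definition var_w :: "bool \<Rightarrow> (nat \<Rightarrow> nat \<Rightarrow> real) \<Rightarrow> nat \<Rightarrow> nat \<Rightarrow> real" where
  "var_w zd H l m = (if l = m \<and> zd then 0 else H l m * (1 - H l m))"

definition alpha_n :: "nat \<Rightarrow> bool \<Rightarrow> (nat \<Rightarrow> nat \<Rightarrow> real) \<Rightarrow> real" where
  "alpha_n n zd H = sqrt (Max ((\<lambda>m. \<Sum>l<n. var_w zd H l m) ` {..<n}))"

definition eig_decomp :: "nat \<Rightarrow> nat \<Rightarrow> (nat \<Rightarrow> nat \<Rightarrow> real) \<Rightarrow> (nat \<Rightarrow> nat \<Rightarrow> real)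
    \<Rightarrow> (nat \<Rightarrow> real) \<Rightarrow> bool" where
  "eig_decomp n K H V d \<longleftrightarrow>
     (\<forall>l<n. \<forall>m<n. H l m = (\<Sum>k<K. d k * V l k * V m k)) \<and>
     (\<forall>j<K. \<forall>k<K. (\<Sum>l<n. V l j * V l k) = (if j = k then 1 else 0)) \<and>
     (\<forall>a<K. \<forall>b<K. a < b \<longrightarrow> \<bar>d b\<bar> \<le> \<bar>d a\<bar>) \<and>
     (\<forall>k<K. d k \<noteq> 0)"

definition eig_gap :: "real \<Rightarrow> nat \<Rightarrow> (nat \<Rightarrow> real) \<Rightarrow> bool" where
  "eig_gap c0 K d \<longleftrightarrow>
     (\<forall>a<K. \<forall>b<K. a < b \<and> d a \<noteq> - d b \<longrightarrow> 1 + c0 \<le> \<bar>d a\<bar> / \<bar>d b\<bar>)"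

definition gram :: "nat \<Rightarrow> nat \<Rightarrow> (nat \<Rightarrow> nat \<Rightarrow> real) \<Rightarrow> real mat" where
  "gram n K Pm = mat K K (\<lambda>(a,b). \<Sum>l<n. Pm l a * Pm l b)"

text \<open>(C2) at a given n: lambda_K(Pm^T Pm) >= c0 n (Pm^T Pm is symmetric PSD, so lambda_K is its
  smallest eigenvalue), lambda_K(P) >= c0 (read as: the K-th eigenvalue in the magnitude
  ordering, i.e. every eigenvalue of P has absolute value >= c0), theta >= n^(-c1).\<close>
definition cond_C2 :: "real \<Rightarrow> real \<Rightarrow> nat \<Rightarrow> nat \<Rightarrow> real \<Rightarrow> (nat \<Rightarrow> nat \<Rightarrow> real)
    \<Rightarrow> (nat \<Rightarrow> nat \<Rightarrow> real) \<Rightarrow> bool" where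
  "cond_C2 c0 c1 n K theta Pm P \<longleftrightarrow>
     (\<forall>\<mu>. eigenvalue (gram n K Pm) \<mu> \<longrightarrow> c0 * real n \<le> \<mu>) \<and>
     (\<forall>\<mu>. eigenvalue (mat K K (\<lambda>(a,b). P a b)) \<mu> \<longrightarrow> c0 \<le> \<bar>\<mu>\<bar>) \<and>
     real n powr (- c1) \<le> theta"

definition pure_nodes :: "nat \<Rightarrow> (nat \<Rightarrow> nat \<Rightarrow> real) \<Rightarrow> nat \<Rightarrow> nat set" where
  "pure_nodes n Pm k = {l. l < n \<and> Pm l k = 1}"

definition cond_C4 :: "real \<Rightarrow> real \<Rightarrow> real \<Rightarrow> nat \<Rightarrow> nat \<Rightarrow> (nat \<Rightarrow> real)
    \<Rightarrow> (nat \<Rightarrow> nat \<Rightarrow> real) \<Rightarrow> bool" where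
  "cond_C4 c2 c3 c4 n K th Pm \<longleftrightarrow>
     (\<forall>k<K. c2 * real n \<le> real (card (pure_nodes n Pm k))) \<and>
     Max (th ` {..<n}) \<le> c4 * Min (th ` {..<n}) \<and>
     real n powr (- c3) \<le> (Min (th ` {..<n}))\<^sup>2"

end

theory Submission imports Defs "HOL-Analysis.Analysis" begin
lemma eig_vec:
  assumes "eig_decomp n K H V d" "k < K" "l < n"
  shows "(\<Sum>m<n. H l m * V m k) = d k * V l k"
proof -
  have H: "\<And>m. m < n \<Longrightarrow> H l m = (\<Sum>j<K. d j * V l j * V m j)"
    using assms unfolding eig_decomp_def by auto
  have O: "\<And>j. j < K \<Longrightarrow> (\<Sum>m<n. V m j * V m k) = (if j = k then 1 else 0)"
    using assms unfolding eig_decomp_def by auto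
  have "(\<Sum>m<n. H l m * V m k) = (\<Sum>m<n. \<Sum>j<K. d j * V l j * (V m j * V m k))"
    by (rule sum.cong) (auto simp: H sum_distrib_right mult.assoc)
  also have "\<dots> = (\<Sum>j<K. d j * V l j * (\<Sum>m<n. V m j * V m k))"
    by (subst sum.swap) (simp add: sum_distrib_left)
  also have "\<dots> = (\<Sum>j<K. if j = k then d j * V l j else 0)"
    by (rule sum.cong) (auto simp: O)
  also have "\<dots> = d k * V l k" using assms(2) by simp
  finally show ?thesis .
qed

lemma span_th:
  assumes "eig_decomp n K (dcmm_H K th Pm P) V d" "k < K" "l < n"
  shows "V l k = th l * (\<Sum>a<K. Pm l a * ((\<Sum>b<K. P a b * (\<Sum>m<n. th m * Pm m b * V m k)) / d k))"
proof -
  have dk: "d k \<noteq> 0" using assms unfolding eig_decomp_def by auto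
  have "d k * V l k = (\<Sum>m<n. dcmm_H K th Pm P l m * V m k)"
    using eig_vec[OF assms] by simp
  also have "\<dots> = (\<Sum>m<n. \<Sum>a<K. \<Sum>b<K. th l * (Pm l a * (P a b * (th m * Pm m b * V m k))))"
    unfolding dcmm_H_def by (simp add: sum_distrib_left sum_distrib_right mult_ac)
  also have "\<dots> = (\<Sum>a<K. \<Sum>m<n. \<Sum>b<K. th l * (Pm l a * (P a b * (th m * Pm m b * V m k))))"
    by (rule sum.swap)
  also have "\<dots> = (\<Sum>a<K. \<Sum>b<K. \<Sum>m<n. th l * (Pm l a * (P a b * (th m * Pm m b * V m k))))"
    by (rule sum.cong[OF refl], rule sum.swap)
  also have "\<dots> = th l * (\<Sum>a<K. Pm l a * (\<Sum>b<K. P a b * (\<Sum>m<n. th m * Pm m b * V m k)))"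
    by (simp add: sum_distrib_left)
  finally have E: "d k * V l k = th l * (\<Sum>a<K. Pm l a * (\<Sum>b<K. P a b * (\<Sum>m<n. th m * Pm m b * V m k)))" .
  have "V l k = th l * (\<Sum>a<K. Pm l a * (\<Sum>b<K. P a b * (\<Sum>m<n. th m * Pm m b * V m k))) / d k"
    using E dk by (simp add: field_simps)
  also have "\<dots> = th l * ((\<Sum>a<K. Pm l a * (\<Sum>b<K. P a b * (\<Sum>m<n. th m * Pm m b * V m k))) / d k)"
    by simp
  also have "\<dots> = th l * (\<Sum>a<K. Pm l a * ((\<Sum>b<K. P a b * (\<Sum>m<n. th m * Pm m b * V m k)) / d k))"
    apply (rule arg_cong[where f="\<lambda>x. th l * x"])
    apply (subst sum_divide_distrib)
    apply (rule sum.cong[OF refl])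
    apply (simp only: times_divide_eq_right)
    done
  finally show ?thesis .
qed

definition qf :: "nat \<Rightarrow> (nat \<Rightarrow> nat \<Rightarrow> real) \<Rightarrow> (nat \<Rightarrow> real) \<Rightarrow> real" where
  "qf K G x = (\<Sum>i<K. \<Sum>j<K. x i * G i j * x j)"
definition nq :: "nat \<Rightarrow> (nat \<Rightarrow> real) \<Rightarrow> real" where
  "nq K x = (\<Sum>i<K. (x i)\<^sup>2)"

lemma qf_expand:
  "qf K G (\<lambda>i. a i + t * b i) = qf K G a + t * ((\<Sum>i<K. \<Sum>j<K. a i * G i j * b j) + (\<Sum>i<K. \<Sum>j<K. b i * G i j * a j)) + t\<^sup>2 * qf K G b"
  unfolding qf_def
  by (simp add: algebra_simps sum.distrib sum_distrib_left power2_eq_square)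

lemma nq_expand:
  "nq K (\<lambda>i. a i + t * b i) = nq K a + 2 * t * (\<Sum>i<K. a i * b i) + t\<^sup>2 * nq K b"
  unfolding nq_def
  by (simp add: algebra_simps sum.distrib sum_distrib_left power2_eq_square)

lemma qf_sym:
  fixes G :: "nat \<Rightarrow> nat \<Rightarrow> real"
  assumes "\<forall>i<K. \<forall>j<K. G i j = G j i"
  shows "(\<Sum>i<K. \<Sum>j<K. a i * G i j * b j) = (\<Sum>i<K. \<Sum>j<K. b i * G i j * a j)"
proof -
  have "(\<Sum>i<K. \<Sum>j<K. a i * G i j * b j) = (\<Sum>j<K. \<Sum>i<K. a i * G i j * b j)"
    by (rule sum.swap)
  also have "\<dots> = (\<Sum>i<K. \<Sum>j<K. b i * G i j * a j)"
  proof (intro sum.cong refl)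
    fix i j assume "i \<in> {..<K}" "j \<in> {..<K}"
    then have "G j i = G i j" using assms by auto
    then show "a j * G j i * b i = b i * G i j * a j" by (simp add: mult_ac)
  qed
  finally show ?thesis .
qed

lemma nq_nonneg: "0 \<le> nq K x"
  unfolding nq_def by (simp add: sum_nonneg)

lemma min_exists:
  assumes "0 < K"
  shows "\<exists>x0. nq K x0 = 1 \<and> (\<forall>x. nq K x = 1 \<longrightarrow> qf K G x0 \<le> qf K G x)"
proof -
  define A where "A = (\<lambda>i::nat. if i < K then {-1..1::real} else {0})"
  define S where "S = Pi\<^sub>E UNIV A \<inter> (nq K) -` {1}"
  have c1: "compact (Pi\<^sub>E UNIV A)"
  proof -
    have "compactin (product_topology (\<lambda>i. euclidean) UNIV) (Pi\<^sub>E UNIV A)"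
      by (subst compactin_PiE) (auto simp: A_def)
    then show ?thesis by (simp add: euclidean_product_topology)
  qed
  have cnq: "continuous_on UNIV (nq K)"
    unfolding nq_def by (intro continuous_intros continuous_on_product_coordinates)
  have cqf: "continuous_on UNIV (qf K G)"
    unfolding qf_def by (intro continuous_intros continuous_on_product_coordinates)
  have "closed ((nq K) -` {1})"
    using cnq by (intro closed_vimage) auto
  then have cS: "compact S" unfolding S_def using c1 by (rule compact_Int_closed[rotated])
  define e where "e = (\<lambda>i::nat. if i = 0 then 1 else (0::real))"
  have "nq K e = (\<Sum>i<K. if i = 0 then 1 else 0)"
    unfolding nq_def e_def by (rule sum.cong) auto
  also have "\<dots> = 1" using assms by simp
  finally have "e \<in> S" using assms unfolding S_def A_def by (auto simp: e_def)
  then have ne: "S \<noteq> {}" by auto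
  obtain x0 where x0: "x0 \<in> S" "\<forall>y\<in>S. qf K G x0 \<le> qf K G y"
    using continuous_attains_inf[OF cS ne continuous_on_subset[OF cqf]] by blast
  show ?thesis
  proof (intro exI conjI allI impI)
    show "nq K x0 = 1" using x0 unfolding S_def by auto
    fix x assume x: "nq K x = 1"
    define y where "y = (\<lambda>i. if i < K then x i else 0)"
    have xi: "\<bar>x i\<bar> \<le> 1" if "i < K" for i
    proof -
      have "(x i)\<^sup>2 \<le> nq K x" unfolding nq_def
        using that by (intro member_le_sum) auto
      then have "(x i)\<^sup>2 \<le> 1\<^sup>2" using x by simp
      then show ?thesis using abs_le_square_iff[of "x i" 1] by simp
    qed
    have "nq K y = nq K x" unfolding nq_def y_def by simp
    moreover have "qf K G y = qf K G x" unfolding qf_def y_def by simp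
    moreover have "y \<in> Pi\<^sub>E UNIV A" using xi unfolding y_def A_def by (auto simp: abs_le_iff)
    ultimately have "y \<in> S" using x unfolding S_def by auto
    then show "qf K G x0 \<le> qf K G x" using x0 \<open>qf K G y = qf K G x\<close> by auto
  qed
qed

lemma qf_scale:
  fixes G :: "nat \<Rightarrow> nat \<Rightarrow> real"
  shows "qf K G (\<lambda>i. x i / s) = qf K G x / s\<^sup>2"
  unfolding qf_def by (simp add: sum_divide_distrib power2_eq_square)

lemma nq_scale: "nq K (\<lambda>i. x i / s) = nq K x / s\<^sup>2"
  unfolding nq_def by (simp add: sum_divide_distrib power_divide)

lemma quad_lower:
  fixes G :: "nat \<Rightarrow> nat \<Rightarrow> real"
  assumes sym: "\<forall>i<K. \<forall>j<K. G i j = G j i"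
  and eig: "\<forall>\<mu>. eigenvalue (Matrix.mat K K (\<lambda>(a,b). G a b)) \<mu> \<longrightarrow> c \<le> \<mu>"
  shows "c * nq K x \<le> qf K G x"
proof (cases "K = 0")
  case True then show ?thesis by (simp add: nq_def qf_def)
next
  case False
  then obtain x0 where x0: "nq K x0 = 1" "\<And>x. nq K x = 1 \<Longrightarrow> qf K G x0 \<le> qf K G x"
    using min_exists[of K G] by auto
  define m where "m = qf K G x0"
  have bnd: "m * nq K x \<le> qf K G x" for x
  proof (cases "nq K x = 0")
    case True
    then have "\<forall>i\<in>{..<K}. (x i)\<^sup>2 = 0" unfolding nq_def
      by (subst sum_nonneg_eq_0_iff[symmetric]) auto
    then have "qf K G x = 0" unfolding qf_def by simp
    then show ?thesis using True by simp
  next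
    case False
    define s where "s = sqrt (nq K x)"
    have s2: "s\<^sup>2 = nq K x" unfolding s_def using nq_nonneg[of K x] by simp
    have "nq K (\<lambda>i. x i / s) = 1" using s2 False by (simp add: nq_scale)
    then have "m \<le> qf K G (\<lambda>i. x i / s)" using x0(2) unfolding m_def by blast
    then have "m \<le> qf K G x / s\<^sup>2" by (simp only: qf_scale)
    then show ?thesis using s2 False nq_nonneg[of K x] by (simp add: field_simps)
  qed
  define w where "w = (\<lambda>i. (\<Sum>j<K. G i j * x0 j) - m * x0 i)"
  define W where "W = (\<Sum>i<K. (w i)\<^sup>2)"
  define R where "R = qf K G w - m * nq K w"
  have R0: "0 \<le> R" using bnd[of w] unfolding R_def by simp
  have key: "0 \<le> 2 * t * W + t\<^sup>2 * R" for t
  proof -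
    have S: "(\<Sum>i<K. \<Sum>j<K. x0 i * G i j * w j) = (\<Sum>i<K. \<Sum>j<K. w i * G i j * x0 j)"
      by (rule qf_sym[OF sym])
    have S2: "(\<Sum>i<K. \<Sum>j<K. w i * G i j * x0 j) = (\<Sum>i<K. w i * (\<Sum>j<K. G i j * x0 j))"
      by (simp add: sum_distrib_left mult_ac)
    have W': "W = (\<Sum>i<K. w i * (\<Sum>j<K. G i j * x0 j)) - m * (\<Sum>i<K. x0 i * w i)"
      unfolding W_def power2_eq_square
      by (subst (2) w_def) (simp add: algebra_simps sum_subtractf sum_distrib_left)
    have "0 \<le> qf K G (\<lambda>i. x0 i + t * w i) - m * nq K (\<lambda>i. x0 i + t * w i)"
      using bnd by simp
    also have "\<dots> = 2 * t * W + t\<^sup>2 * R"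
      unfolding qf_expand nq_expand S S2 W' R_def using x0(1) m_def
      by (simp add: algebra_simps)
    finally show ?thesis .
  qed
  have W0: "W = 0"
  proof (rule ccontr)
    assume "W \<noteq> 0"
    then have Wp: "0 < W" unfolding W_def using sum_nonneg[of "{..<K}" "\<lambda>i. (w i)\<^sup>2"] by auto
    define t where "t = - W / (R + 1)"
    have R1: "R + 1 \<noteq> 0" using R0 by linarith
    have tq: "t * (R + 1) = - W" unfolding t_def using R1 by simp
    have "(R + 1)\<^sup>2 * (2 * t * W + t\<^sup>2 * R) = 2 * (t * (R + 1)) * W * (R + 1) + (t * (R + 1))\<^sup>2 * R"
      by (simp add: algebra_simps power2_eq_square)
    also have "\<dots> = - (W\<^sup>2 * (R + 2))" unfolding tq by (simp add: algebra_simps power2_eq_square)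
    also have "\<dots> < 0" using Wp R0 by (simp add: mult_pos_pos)
    finally have "(R + 1)\<^sup>2 * (2 * t * W + t\<^sup>2 * R) < 0" .
    moreover have "0 \<le> (R + 1)\<^sup>2 * (2 * t * W + t\<^sup>2 * R)" using key[of t] by simp
    ultimately show False by simp
  qed
  then have wi: "\<forall>i\<in>{..<K}. (w i)\<^sup>2 = 0" unfolding W_def
    by (subst sum_nonneg_eq_0_iff[symmetric]) auto
  have "eigenvalue (Matrix.mat K K (\<lambda>(a,b). G a b)) m"
    unfolding eigenvalue_def eigenvector_def
  proof (intro exI conjI)
    show "Matrix.vec K x0 \<in> carrier_vec (dim_row (Matrix.mat K K (\<lambda>(a,b). G a b)))" by simp
    show "Matrix.vec K x0 \<noteq> 0\<^sub>v (dim_row (Matrix.mat K K (\<lambda>(a,b). G a b)))"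
    proof
      assume "Matrix.vec K x0 = 0\<^sub>v (dim_row (Matrix.mat K K (\<lambda>(a,b). G a b)))"
      then have "\<forall>i<K. x0 i = 0"
        by (metis dim_row_mat(1) index_vec index_zero_vec(1))
      then have "nq K x0 = 0" unfolding nq_def by simp
      then show False using x0(1) by simp
    qed
    show "Matrix.mat K K (\<lambda>(a,b). G a b) *\<^sub>v Matrix.vec K x0 = m \<cdot>\<^sub>v Matrix.vec K x0"
    proof (rule eq_vecI)
      fix i assume "i < dim_vec (m \<cdot>\<^sub>v Matrix.vec K x0)"
      then have i: "i < K" by simp
      have "(\<Sum>j<K. G i j * x0 j) = m * x0 i" using wi i unfolding w_def by auto
      then show "(Matrix.mat K K (\<lambda>(a,b). G a b) *\<^sub>v Matrix.vec K x0) $ i = (m \<cdot>\<^sub>v Matrix.vec K x0) $ i"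
        using i by (simp add: scalar_prod_def row_def atLeast0LessThan)
    qed simp
  qed
  then have "c \<le> m" using eig by blast
  then have "c * nq K x \<le> m * nq K x" using nq_nonneg[of K x] by (rule mult_right_mono)
  then show ?thesis using bnd[of x] by linarith
qed


lemma sq_expand_qf:
  fixes Pm :: "nat \<Rightarrow> nat \<Rightarrow> real"
  shows "(\<Sum>m<n. (\<Sum>a<K. Pm m a * y a)\<^sup>2) = qf K (\<lambda>a b. \<Sum>m<n. Pm m a * Pm m b) y"
proof -
  have "(\<Sum>m<n. (\<Sum>a<K. Pm m a * y a)\<^sup>2) = (\<Sum>m<n. \<Sum>a<K. \<Sum>b<K. y a * (Pm m a * Pm m b) * y b)"
    by (simp add: power2_eq_square sum_product mult_ac)
  also have "\<dots> = (\<Sum>a<K. \<Sum>m<n. \<Sum>b<K. y a * (Pm m a * Pm m b) * y b)"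
    by (rule sum.swap)
  also have "\<dots> = (\<Sum>a<K. \<Sum>b<K. \<Sum>m<n. y a * (Pm m a * Pm m b) * y b)"
    by (rule sum.cong[OF refl], rule sum.swap)
  also have "\<dots> = qf K (\<lambda>a b. \<Sum>m<n. Pm m a * Pm m b) y"
    unfolding qf_def by (simp add: sum_distrib_left sum_distrib_right)
  finally show ?thesis .
qed

lemma conv_bound:
  fixes Pm :: "nat \<Rightarrow> nat \<Rightarrow> real"
  assumes "\<forall>a<K. 0 \<le> Pm l a" "(\<Sum>a<K. Pm l a) = 1" "\<forall>a<K. \<bar>y a\<bar> \<le> B"
  shows "\<bar>\<Sum>a<K. Pm l a * y a\<bar> \<le> B"
proof -
  have "\<bar>\<Sum>a<K. Pm l a * y a\<bar> \<le> (\<Sum>a<K. \<bar>Pm l a * y a\<bar>)" by (rule sum_abs)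
  also have "\<dots> \<le> (\<Sum>a<K. Pm l a * B)"
    using assms by (intro sum_mono) (auto simp: abs_mult intro: mult_left_mono)
  also have "\<dots> = B" using assms(2) by (simp add: sum_distrib_right[symmetric])
  finally show ?thesis .
qed

lemma part1_n:
  assumes mm: "mm_model n K zd theta Pm P"
    and ed: "eig_decomp n K (dcmm_H K (\<lambda>_. sqrt theta) Pm P) V d"
    and c2: "cond_C2 c0 c1 n K theta Pm P" and c0: "0 < c0" and k: "k < K" and l: "l < n"
  shows "\<bar>V l k\<bar> \<le> (1 / sqrt c0) / sqrt (real n)"
proof -
  define y where "y = (\<lambda>a. sqrt theta * ((\<Sum>b<K. P a b * (\<Sum>m<n. sqrt theta * Pm m b * V m k)) / d k))"
  have V: "V m k = (\<Sum>a<K. Pm m a * y a)" if "m < n" for m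
    using span_th[OF ed k that] unfolding y_def by (simp add: sum_distrib_left mult_ac)
  define G where "G = (\<lambda>a b. \<Sum>m<n. Pm m a * Pm m b)"
  have "1 = (\<Sum>m<n. V m k * V m k)" using ed k unfolding eig_decomp_def by auto
  also have "\<dots> = (\<Sum>m<n. (\<Sum>a<K. Pm m a * y a)\<^sup>2)"
    by (rule sum.cong) (auto simp: V power2_eq_square)
  also have "\<dots> = qf K G y" unfolding G_def by (rule sq_expand_qf)
  finally have q1: "qf K G y = 1" by simp
  have sym: "\<forall>i<K. \<forall>j<K. G i j = G j i" unfolding G_def by (simp add: mult.commute)
  have eig: "\<forall>\<mu>. eigenvalue (Matrix.mat K K (\<lambda>(a,b). G a b)) \<mu> \<longrightarrow> c0 * real n \<le> \<mu>"
    using c2 unfolding cond_C2_def gram_def G_def by simp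
  have nqb: "c0 * real n * nq K y \<le> 1" using quad_lower[OF sym eig, of y] q1 by simp
  have np: "0 < c0 * real n" using c0 l by simp
  have nqb': "nq K y \<le> 1 / (c0 * real n)" using nqb np by (simp add: field_simps)
  have ya: "\<bar>y a\<bar> \<le> 1 / sqrt c0 / sqrt (real n)" if "a < K" for a
  proof -
    have "(y a)\<^sup>2 \<le> nq K y" unfolding nq_def using that by (intro member_le_sum) auto
    then have "(y a)\<^sup>2 \<le> 1 / (c0 * real n)" using nqb' by linarith
    then have "sqrt ((y a)\<^sup>2) \<le> sqrt (1 / (c0 * real n))" by (rule real_sqrt_le_mono)
    then show ?thesis by (simp add: real_sqrt_mult real_sqrt_divide)
  qed
  have pm: "\<forall>a<K. 0 \<le> Pm l a" "(\<Sum>a<K. Pm l a) = 1"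
    using mm l unfolding mm_model_def dcmm_model_def by auto
  show ?thesis using V[OF l] conv_bound[where Pm=Pm and l=l and K=K and y=y, OF pm] ya by simp
qed

lemma part2_n:
  assumes dm: "dcmm_model n K zd th Pm P"
    and ed: "eig_decomp n K (dcmm_H K th Pm P) V d"
    and c4: "cond_C4 c2 c3 c4 n K th Pm" and c2: "0 < c2" and k: "k < K" and l: "l < n"
  shows "\<bar>V l k\<bar> \<le> (c4 / sqrt c2) / sqrt (real n)"
proof -
  define z where "z = (\<lambda>a. (\<Sum>b<K. P a b * (\<Sum>m<n. th m * Pm m b * V m k)) / d k)"
  have V: "V m k = th m * (\<Sum>a<K. Pm m a * z a)" if "m < n" for m
    using span_th[OF ed k that] unfolding z_def by simp
  have pm: "\<forall>a<K. 0 \<le> Pm m a" "(\<Sum>a<K. Pm m a) = 1" if "m < n" for m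
    using dm that unfolding dcmm_model_def by auto
  have thp: "0 < th m" if "m < n" for m using dm that unfolding dcmm_model_def by auto
  have fin: "finite (th ` {..<n})" and ne: "th ` {..<n} \<noteq> {}" using l by auto
  define tmin where "tmin = Min (th ` {..<n})"
  have tmin_in: "tmin \<in> th ` {..<n}" unfolding tmin_def using fin ne by (rule Min_in)
  then have tminp: "0 < tmin" using thp by auto
  have tmin_le: "tmin \<le> th m" if "m < n" for m unfolding tmin_def using fin that by simp
  have thl: "th l \<le> c4 * tmin"
  proof -
    have "th l \<le> Max (th ` {..<n})" using fin l by simp
    also have "\<dots> \<le> c4 * tmin" using c4 unfolding cond_C4_def tmin_def by simp
    finally show ?thesis .
  qed
  define B where "B = 1 / (tmin * sqrt (c2 * real n))"
  have Bp: "0 < B" unfolding B_def using tminp c2 l by simp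
  have za: "\<bar>z a\<bar> \<le> B" if a: "a < K" for a
  proof -
    define N where "N = pure_nodes n Pm a"
    have Nsub: "N \<subseteq> {..<n}" unfolding N_def pure_nodes_def by auto
    have Vpure: "V m k = th m * z a" if m: "m \<in> N" for m
    proof -
      have mn: "m < n" and pa: "Pm m a = 1" using m unfolding N_def pure_nodes_def by auto
      have "(\<Sum>b<K. Pm m b) = Pm m a + (\<Sum>b\<in>{..<K}-{a}. Pm m b)"
        using a by (simp add: sum.remove)
      then have "(\<Sum>b\<in>{..<K}-{a}. Pm m b) = 0" using pm(2)[OF mn] pa by simp
      then have z0: "\<forall>b\<in>{..<K}-{a}. Pm m b = 0"
        using pm(1)[OF mn] by (subst sum_nonneg_eq_0_iff[symmetric]) auto
      have "(\<Sum>b<K. Pm m b * z b) = Pm m a * z a + (\<Sum>b\<in>{..<K}-{a}. Pm m b * z b)"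
        using a by (simp add: sum.remove)
      also have "\<dots> = z a" using z0 pa by simp
      finally show ?thesis using V[OF mn] by simp
    qed
    have "real (card N) * (tmin\<^sup>2 * (z a)\<^sup>2) = (\<Sum>m\<in>N. tmin\<^sup>2 * (z a)\<^sup>2)" by simp
    also have "\<dots> \<le> (\<Sum>m\<in>N. (V m k)\<^sup>2)"
    proof (rule sum_mono)
      fix m assume m: "m \<in> N"
      then have mn: "m < n" using Nsub by auto
      have "tmin\<^sup>2 \<le> (th m)\<^sup>2" using tmin_le[OF mn] tminp by (intro power_mono) auto
      then show "tmin\<^sup>2 * (z a)\<^sup>2 \<le> (V m k)\<^sup>2"
        unfolding Vpure[OF m] power_mult_distrib by (intro mult_right_mono) auto
    qed
    also have "\<dots> \<le> (\<Sum>m<n. (V m k)\<^sup>2)" using Nsub by (intro sum_mono2) auto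
    also have "\<dots> = 1" using ed k unfolding eig_decomp_def by (simp add: power2_eq_square)
    finally have A1: "real (card N) * (tmin\<^sup>2 * (z a)\<^sup>2) \<le> 1" .
    have "c2 * real n \<le> real (card N)" using c4 a unfolding cond_C4_def N_def by simp
    then have "c2 * real n * (tmin\<^sup>2 * (z a)\<^sup>2) \<le> 1"
      using A1 by (meson mult_right_mono order_trans zero_le_mult_iff zero_le_power2)
    then have "(z a)\<^sup>2 \<le> 1 / (c2 * real n * tmin\<^sup>2)"
      using c2 l tminp by (simp add: field_simps)
    then have "sqrt ((z a)\<^sup>2) \<le> sqrt (1 / (c2 * real n * tmin\<^sup>2))" by (rule real_sqrt_le_mono)
    then show ?thesis unfolding B_def using tminp
      by (simp add: real_sqrt_mult real_sqrt_divide mult_ac)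
  qed
  have "\<bar>V l k\<bar> = th l * \<bar>\<Sum>a<K. Pm l a * z a\<bar>" using V[OF l] thp[OF l] by (simp add: abs_mult)
  also have "\<dots> \<le> c4 * tmin * B"
  proof -
    have cb: "\<bar>\<Sum>a<K. Pm l a * z a\<bar> \<le> B"
      using conv_bound[where Pm=Pm and l=l and K=K and y=z and B=B, OF pm[OF l]] za by blast
    have "0 \<le> c4 * tmin" using thl thp[OF l] by linarith
    then show ?thesis using mult_mono[OF thl cb] by simp
  qed
  also have "\<dots> = (c4 / sqrt c2) / sqrt (real n)"
    unfolding B_def using tminp by (simp add: real_sqrt_mult)
  finally show ?thesis .
qed

theorem lemma7:
  fixes K :: nat
  shows
  "(\<forall>(zd::bool) (theta::nat \<Rightarrow> real) (Pm::nat \<Rightarrow> nat \<Rightarrow> nat \<Rightarrow> real)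
       (P::nat \<Rightarrow> nat \<Rightarrow> nat \<Rightarrow> real) (V::nat \<Rightarrow> nat \<Rightarrow> nat \<Rightarrow> real) (d::nat \<Rightarrow> nat \<Rightarrow> real)
       (c0::real) (c0'::real) (c1::real).
      (\<forall>\<^sub>F n in sequentially.
          mm_model n K zd (theta n) (Pm n) (P n) \<and>
          eig_decomp n K (dcmm_H K (\<lambda>_. sqrt (theta n)) (Pm n) (P n)) (V n) (d n) \<and>
          eig_gap c0 K (d n) \<and>
          cond_C2 c0' c1 n K (theta n) (Pm n) (P n)) \<and>
      0 < c0 \<and>
      filterlim (\<lambda>n. alpha_n n zd (dcmm_H K (\<lambda>_. sqrt (theta n)) (Pm n) (P n))) at_top sequentially \<and>
      0 < c0' \<and> c0' < 1 \<and> 0 < c1 \<and> c1 < 1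
    \<longrightarrow> (\<exists>C. \<forall>\<^sub>F n in sequentially. \<forall>k<K. \<forall>l<n. \<bar>V n l k\<bar> \<le> C / sqrt (real n)))
   \<and>
   (\<forall>(zd::bool) (th::nat \<Rightarrow> nat \<Rightarrow> real) (Pm::nat \<Rightarrow> nat \<Rightarrow> nat \<Rightarrow> real)
       (P::nat \<Rightarrow> nat \<Rightarrow> nat \<Rightarrow> real) (V::nat \<Rightarrow> nat \<Rightarrow> nat \<Rightarrow> real) (d::nat \<Rightarrow> nat \<Rightarrow> real)
       (c0::real) (c2::real) (c3::real) (c4::real).
      (\<forall>\<^sub>F n in sequentially.
          dcmm_model n K zd (th n) (Pm n) (P n) \<and>
          eig_decomp n K (dcmm_H K (th n) (Pm n) (P n)) (V n) (d n) \<and>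
          eig_gap c0 K (d n) \<and>
          cond_C4 c2 c3 c4 n K (th n) (Pm n)) \<and>
      0 < c0 \<and>
      filterlim (\<lambda>n. alpha_n n zd (dcmm_H K (th n) (Pm n) (P n))) at_top sequentially \<and>
      0 < c2 \<and> c2 < 1 \<and> 0 < c3 \<and> c3 < 1 \<and> 0 < c4
    \<longrightarrow> (\<exists>C. \<forall>\<^sub>F n in sequentially. \<forall>k<K. \<forall>l<n. \<bar>V n l k\<bar> \<le> C / sqrt (real n)))"
proof (intro conjI allI impI)
  fix zd theta Pm P V d c0 c0' c1
  assume A: "(\<forall>\<^sub>F n in sequentially.
          mm_model n K zd (theta n) (Pm n) (P n) \<and>
          eig_decomp n K (dcmm_H K (\<lambda>_. sqrt (theta n)) (Pm n) (P n)) (V n) (d n) \<and>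
          eig_gap c0 K (d n) \<and>
          cond_C2 c0' c1 n K (theta n) (Pm n) (P n)) \<and>
      0 < c0 \<and>
      filterlim (\<lambda>n. alpha_n n zd (dcmm_H K (\<lambda>_. sqrt (theta n)) (Pm n) (P n))) at_top sequentially \<and>
      0 < c0' \<and> c0' < 1 \<and> 0 < c1 \<and> c1 < 1"
  show "\<exists>C. \<forall>\<^sub>F n in sequentially. \<forall>k<K. \<forall>l<n. \<bar>V n l k\<bar> \<le> C / sqrt (real n)"
  proof (intro exI)
    show "\<forall>\<^sub>F n in sequentially. \<forall>k<K. \<forall>l<n. \<bar>V n l k\<bar> \<le> (1 / sqrt c0') / sqrt (real n)"
    proof (rule eventually_mono)
      show "\<forall>\<^sub>F n in sequentially.
          mm_model n K zd (theta n) (Pm n) (P n) \<and>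
          eig_decomp n K (dcmm_H K (\<lambda>_. sqrt (theta n)) (Pm n) (P n)) (V n) (d n) \<and>
          eig_gap c0 K (d n) \<and>
          cond_C2 c0' c1 n K (theta n) (Pm n) (P n)" using A by blast
      have c: "0 < c0'" using A by blast
      fix n assume "mm_model n K zd (theta n) (Pm n) (P n) \<and>
          eig_decomp n K (dcmm_H K (\<lambda>_. sqrt (theta n)) (Pm n) (P n)) (V n) (d n) \<and>
          eig_gap c0 K (d n) \<and>
          cond_C2 c0' c1 n K (theta n) (Pm n) (P n)"
      then show "\<forall>k<K. \<forall>l<n. \<bar>V n l k\<bar> \<le> (1 / sqrt c0') / sqrt (real n)"
        using part1_n c by blast
    qed
  qed
next
  fix zd th Pm P V d c0 c2 c3 c4
  assume A: "(\<forall>\<^sub>F n in sequentially.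
          dcmm_model n K zd (th n) (Pm n) (P n) \<and>
          eig_decomp n K (dcmm_H K (th n) (Pm n) (P n)) (V n) (d n) \<and>
          eig_gap c0 K (d n) \<and>
          cond_C4 c2 c3 c4 n K (th n) (Pm n)) \<and>
      0 < c0 \<and>
      filterlim (\<lambda>n. alpha_n n zd (dcmm_H K (th n) (Pm n) (P n))) at_top sequentially \<and>
      0 < c2 \<and> c2 < 1 \<and> 0 < c3 \<and> c3 < 1 \<and> 0 < c4"
  show "\<exists>C. \<forall>\<^sub>F n in sequentially. \<forall>k<K. \<forall>l<n. \<bar>V n l k\<bar> \<le> C / sqrt (real n)"
  proof (intro exI)
    show "\<forall>\<^sub>F n in sequentially. \<forall>k<K. \<forall>l<n. \<bar>V n l k\<bar> \<le> (c4 / sqrt c2) / sqrt (real n)"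
    proof (rule eventually_mono)
      show "\<forall>\<^sub>F n in sequentially.
          dcmm_model n K zd (th n) (Pm n) (P n) \<and>
          eig_decomp n K (dcmm_H K (th n) (Pm n) (P n)) (V n) (d n) \<and>
          eig_gap c0 K (d n) \<and>
          cond_C4 c2 c3 c4 n K (th n) (Pm n)" using A by blast
      have c: "0 < c2" using A by blast
      fix n assume "dcmm_model n K zd (th n) (Pm n) (P n) \<and>
          eig_decomp n K (dcmm_H K (th n) (Pm n) (P n)) (V n) (d n) \<and>
          eig_gap c0 K (d n) \<and>
          cond_C4 c2 c3 c4 n K (th n) (Pm n)"
      then show "\<forall>k<K. \<forall>l<n. \<bar>V n l k\<bar> \<le> (c4 / sqrt c2) / sqrt (real n)"
        using part2_n c by blast
    qed
  qed
qed

end
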